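(* Let $\mathcal{M}=\langle S,\to,L\rangle$ be a labeled transition system, let $B\subseteq S\times S$ be a skipping simulation on $\mathcal{M}$, and let $s,w\in S$. Then every path (branch from the root) of the tree $\mathit{ranktCt}(\mathcal{M},s,w)$ is finite.
   Context: A labeled transition system is $\mathcal{M}=\langle S,\to,L\rangle$ where $S$ is a non-empty set of states, $\to\subseteq S\times S$ is left-total, and $L$ is a function with domain $S$. A fullpath is an infinite sequence $\sigma$ with $\sigma(i)\to\sigma(i+1)$ for all $i$; it starts at $\sigma(0)$. $w\to^{+}v$ means there is a finite path $w=v_0\to\cdots\to v_k=v$ with $k\ge1$. Let $\mathit{INC}$ be the set of strictly increasing infinite sequences of naturals starting at $0$. For a fullpath $\sigma$ and $\pi\in\mathit{INC}$ the $i$-th segment of $\sigma$ is $\sigma(\pi(i)),\dots,\sigma(\pi(i+1)-1)$. $\mathit{match}(B,\sigma,\delta)$ holds iff there exist $\pi,\xi\in\mathit{INC}$ such that for every $i$ and every state $x$ in the $i$-th segment of $\sigma$ w.r.t. $\pi$, $xB\delta(\xi(i))$. $B$ is a skipping simulation (SKS) iff for all $s,w$ with $sBw$: $L(s)=L(w)$, and for every fullpath $\sigma$ starting at $s$ there is a fullpath $\delta$ starting at $w$ with $\mathit{match}(B,\sigma,\delta)$. The computation tree $\mathit{ctree}(\mathcal{M},s)$ has as nodes finite sequences over $S$; it is the smallest tree such that $\langle s\rangle$ is the root, and if $\langle s,\dots,x\rangle$ is a node and $x\to y$ then $\langle s,\dots,x,y\rangle$ is a node whose parent is $\langle s,\dots,x\rangle$.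 For the SKS $B$: if not $sBw$, $\mathit{ranktCt}(\mathcal{M},s,w)$ is the empty tree; otherwise it is the largest subtree of $\mathit{ctree}(\mathcal{M},s)$ (containing the root) such that every non-root node $\langle s,\dots,x\rangle$ satisfies $xBw$ and, for all $v$ with $w\to^{+}v$, not $xBv$. *)

theory Defs
  imports Main
begin

definition lts :: "'a set \<Rightarrow> ('a \<times> 'a) set \<Rightarrow> ('a \<Rightarrow> 'l) \<Rightarrow> bool" where
  "lts S R L \<longleftrightarrow> S \<noteq> {} \<and> R \<subseteq> S \<times> S \<and> (\<forall>x\<in>S. \<exists>y. (x, y) \<in> R)"

definition fullpath :: "('a \<times> 'a) set \<Rightarrow> (nat \<Rightarrow> 'a) \<Rightarrow> bool" where
  "fullpath R \<sigma> \<longleftrightarrow> (\<forall>i. (\<sigma> i, \<sigma> (Suc i)) \<in> R)"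

definition INC :: "(nat \<Rightarrow> nat) set" where
  "INC = {\<pi>. strict_mono \<pi> \<and> \<pi> 0 = 0}"

definition match :: "('a \<times> 'a) set \<Rightarrow> (nat \<Rightarrow> 'a) \<Rightarrow> (nat \<Rightarrow> 'a) \<Rightarrow> bool" where
  "match B \<sigma> \<delta> \<longleftrightarrow> (\<exists>\<pi>\<in>INC. \<exists>\<xi>\<in>INC. \<forall>i j. \<pi> i \<le> j \<and> j < \<pi> (Suc i) \<longrightarrow> (\<sigma> j, \<delta> (\<xi> i)) \<in> B)"

definition SKS :: "'a set \<Rightarrow> ('a \<times> 'a) set \<Rightarrow> ('a \<Rightarrow> 'l) \<Rightarrow> ('a \<times> 'a) set \<Rightarrow> bool" where
  "SKS S R L B \<longleftrightarrow> B \<subseteq> S \<times> S \<and>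
     (\<forall>s w. (s, w) \<in> B \<longrightarrow> L s = L w \<and>
        (\<forall>\<sigma>. fullpath R \<sigma> \<and> \<sigma> 0 = s \<longrightarrow> (\<exists>\<delta>. fullpath R \<delta> \<and> \<delta> 0 = w \<and> match B \<sigma> \<delta>)))"

text \<open>Computation tree: nodes are finite state sequences; the parent of a non-root node
  is obtained by dropping its last element.\<close>
inductive_set ctree :: "('a \<times> 'a) set \<Rightarrow> 'a \<Rightarrow> 'a list set" for R s where
  root: "[s] \<in> ctree R s"
| child: "ns \<in> ctree R s \<Longrightarrow> (last ns, y) \<in> R \<Longrightarrow> ns @ [y] \<in> ctree R s"

definition subtree_root :: "('a \<times> 'a) set \<Rightarrow> 'a \<Rightarrow> 'a list set \<Rightarrow> bool" where
  "subtree_root R s T \<longleftrightarrow> T \<subseteq> ctree R s \<and> [s] \<in> T \<and>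
     (\<forall>ns y. ns @ [y] \<in> T \<and> ns \<noteq> [] \<longrightarrow> ns \<in> T)"

definition ranktCt :: "('a \<times> 'a) set \<Rightarrow> ('a \<times> 'a) set \<Rightarrow> 'a \<Rightarrow> 'a \<Rightarrow> 'a list set" where
  "ranktCt R B s w =
     (if (s, w) \<notin> B then {}
      else \<Union> {T. subtree_root R s T \<and>
                 (\<forall>ns\<in>T. ns \<noteq> [s] \<longrightarrow>
                    (last ns, w) \<in> B \<and> (\<forall>v. (w, v) \<in> R\<^sup>+ \<longrightarrow> (last ns, v) \<notin> B))})"

end

theory Submission
  imports Defs
begin

lemma path_trancl:
  assumes "fullpath R d" shows "(d 0, d (Suc k)) \<in> R\<^sup>+"
proof (induction k)
  case 0 then show ?case using assms unfolding fullpath_def by auto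
next
  case (Suc k)
  then show ?case using assms unfolding fullpath_def by (meson trancl.trancl_into_trancl)
qed

lemma ranktCt_props:
  assumes "ns \<in> ranktCt R B s w" "ns \<noteq> [s]"
  shows "(last ns, w) \<in> B \<and> (\<forall>v. (w, v) \<in> R\<^sup>+ \<longrightarrow> (last ns, v) \<notin> B)"
  using assms unfolding ranktCt_def by (auto split: if_splits)

lemma ranktCt_ctree:
  assumes "ns \<in> ranktCt R B s w" shows "ns \<in> ctree R s"
  using assms unfolding ranktCt_def subtree_root_def by (auto split: if_splits)

lemma ranktCt_B:
  assumes "ns \<in> ranktCt R B s w" shows "(s, w) \<in> B"
  using assms unfolding ranktCt_def by (auto split: if_splits)

lemma ctree_step:
  assumes "ns @ [y] \<in> ctree R s" "ns \<noteq> []" shows "(last ns, y) \<in> R"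
  using assms by (cases rule: ctree.cases) auto

theorem lemma1:
  fixes S :: "'a set" and R :: "('a \<times> 'a) set" and L :: "'a \<Rightarrow> 'l" and B :: "('a \<times> 'a) set"
  assumes "lts S R L" and "SKS S R L B" and "s \<in> S" and "w \<in> S"
  shows "\<not> (\<exists>nd :: nat \<Rightarrow> 'a list. nd 0 = [s] \<and>
            (\<forall>i. nd i \<in> ranktCt R B s w \<and> (\<exists>y. nd (Suc i) = nd i @ [y])))"
proof
  assume "\<exists>nd :: nat \<Rightarrow> 'a list. nd 0 = [s] \<and>
            (\<forall>i. nd i \<in> ranktCt R B s w \<and> (\<exists>y. nd (Suc i) = nd i @ [y]))"
  then obtain nd :: "nat \<Rightarrow> 'a list" where n0: "nd 0 = [s]"
    and nin: "\<And>i. nd i \<in> ranktCt R B s w" and nsuc: "\<And>i. \<exists>y. nd (Suc i) = nd i @ [y]" by blast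
  have len: "length (nd i) = Suc i" for i
  proof (induction i)
    case 0 then show ?case using n0 by simp
  next
    case (Suc i) then show ?case using nsuc[of i] by auto
  qed
  define \<sigma> where "\<sigma> i = last (nd i)" for i
  have fp: "fullpath R \<sigma>" unfolding fullpath_def
  proof
    fix i
    obtain y where y: "nd (Suc i) = nd i @ [y]" using nsuc by blast
    have "nd i \<noteq> []" using len[of i] by auto
    then have "(last (nd i), y) \<in> R" using ctree_step ranktCt_ctree nin y by metis
    then show "(\<sigma> i, \<sigma> (Suc i)) \<in> R" unfolding \<sigma>_def using y by simp
  qed
  have s0: "\<sigma> 0 = s" unfolding \<sigma>_def using n0 by simp
  have sw: "(s, w) \<in> B" using ranktCt_B nin by metis
  obtain \<delta> where fd: "fullpath R \<delta>" and d0: "\<delta> 0 = w" and m: "match B \<sigma> \<delta>"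
    using assms(2) sw fp s0 unfolding SKS_def by blast
  then obtain \<pi> \<xi> where pi: "\<pi> \<in> INC" and xi: "\<xi> \<in> INC"
    and seg: "\<And>i j. \<pi> i \<le> j \<and> j < \<pi> (Suc i) \<Longrightarrow> (\<sigma> j, \<delta> (\<xi> i)) \<in> B"
    unfolding match_def by blast
  have p1: "\<pi> 1 \<ge> 1" using pi strict_monoD[of \<pi> 0 1] unfolding INC_def by simp
  have p12: "\<pi> 1 < \<pi> 2" using pi strict_monoD[of \<pi> 1 2] unfolding INC_def by simp
  have x1: "\<xi> 1 \<ge> 1" using xi strict_monoD[of \<xi> 0 1] unfolding INC_def by simp
  then obtain k where k: "\<xi> 1 = Suc k" by (cases "\<xi> 1") auto
  have "(\<sigma> (\<pi> 1), \<delta> (\<xi> 1)) \<in> B" using seg[of 1 "\<pi> 1"] p12 by (simp add: numeral_2_eq_2)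
  moreover have "(w, \<delta> (\<xi> 1)) \<in> R\<^sup>+" using path_trancl[OF fd, of k] d0 k by simp
  moreover have "nd (\<pi> 1) \<noteq> [s]" using len[of "\<pi> 1"] p1 by auto
  ultimately show False using ranktCt_props[OF nin, of "\<pi> 1"] unfolding \<sigma>_def by blast
qed

end
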